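(* Let $q$ be a prime power and $m\ge 1$. Let $f(x)=\sum_{i=0}^{m-1} f_i x^{[i]}$ be a $q$-polynomial over $\mathbb{F}_{q^m}$ (where $[i]$ denotes $q^i$), and let $\bar f(x)$ be its full $q$-reverse. Let $\mathcal{A}=\{\alpha_0,\dots,\alpha_{m-1}\}$ and $\mathcal{B}=\{\beta_0,\dots,\beta_{m-1}\}$ be ordered bases of $\mathbb{F}_{q^m}$ over $\mathbb{F}_q$, with dual bases $\mathcal{A}'=\{\alpha'_0,\dots,\alpha'_{m-1}\}$ and $\mathcal{B}'=\{\beta'_0,\dots,\beta'_{m-1}\}$. Then for any $M\in\mathbb{F}_q^{m\times m}$, $$M=[f(x)]_{\mathcal{A}}^{\mathcal{B}} \iff M^T=[\bar f(x)]_{\mathcal{B}'}^{\mathcal{A}'}.$$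
   Context: A $q$-polynomial over $\mathbb{F}_{q^m}$ is $f(x)=\sum_i f_i x^{[i]}$ with $f_i\in\mathbb{F}_{q^m}$ and $x^{[i]}=x^{q^i}$; its evaluation is an $\mathbb{F}_q$-linear map $\mathbb{F}_{q^m}\to\mathbb{F}_{q^m}$. Coefficients are indexed cyclically: $f_i:=f_{i \bmod m}$ for all integers $i$. The full $q$-reverse of $f(x)$ is $\bar f(x)=\sum_{i=0}^{m-1}\bar f_i x^{[i]}$ with $\bar f_i=f_{-i}^{[i]}=(f_{-i})^{q^i}$. For a linear map $T:\mathbb{F}_{q^m}\to\mathbb{F}_{q^m}$ and ordered bases $\mathcal{A}=\{\alpha_i\}$, $\mathcal{B}=\{\beta_j\}$, $[T]_{\mathcal{A}}^{\mathcal{B}}$ is the unique matrix over $\mathbb{F}_q$ with $T(\alpha_i)=\sum_j ([T]_{\mathcal{A}}^{\mathcal{B}})_{ij}\beta_j$ for all $i$ (row convention). The dual basis $\mathcal{A}'=\{\alpha'_j\}$ of $\mathcal{A}$ satisfies $\mathrm{Tr}(\alpha_i\alpha'_j)=1$ if $i=j$ and $0$ otherwise, where $\mathrm{Tr}(x)=\sum_{\ell=0}^{m-1}x^{[\ell]}$. All indices start at 0. *)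

theory Defs
  imports "Jordan_Normal_Form.Matrix"
begin

text \<open>The ambient field F_{q^m} is a finite field type 'a with CARD('a) = q^m;
  the subfield F_q is the set of fixed points of x \<mapsto> x^q.\<close>

definition Fq :: "nat \<Rightarrow> 'a::field set" where
  "Fq q = {x. x ^ q = x}"

definition trace :: "nat \<Rightarrow> nat \<Rightarrow> 'a::field \<Rightarrow> 'a" where
  "trace q m x = (\<Sum>l<m. x ^ (q ^ l))"

definition qpoly_eval :: "nat \<Rightarrow> nat \<Rightarrow> (nat \<Rightarrow> 'a::field) \<Rightarrow> 'a \<Rightarrow> 'a" where
  "qpoly_eval q m f x = (\<Sum>i<m. f i * x ^ (q ^ i))"

definition qrev :: "nat \<Rightarrow> nat \<Rightarrow> (nat \<Rightarrow> 'a::field) \<Rightarrow> nat \<Rightarrow> 'a" where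
  "qrev q m f i = (f ((m - i mod m) mod m)) ^ (q ^ i)"

definition is_basis :: "nat \<Rightarrow> nat \<Rightarrow> (nat \<Rightarrow> 'a::field) \<Rightarrow> bool" where
  "is_basis q m b \<longleftrightarrow> (\<forall>y. \<exists>!c. (\<forall>i<m. c i \<in> Fq q) \<and> (\<forall>i\<ge>m. c i = 0)
       \<and> y = (\<Sum>i<m. c i * b i))"

definition is_dual_basis :: "nat \<Rightarrow> nat \<Rightarrow> (nat \<Rightarrow> 'a::field) \<Rightarrow> (nat \<Rightarrow> 'a) \<Rightarrow> bool" where
  "is_dual_basis q m a a' \<longleftrightarrow>
     (\<forall>i<m. \<forall>j<m. trace q m (a i * a' j) = (if i = j then 1 else 0))"

definition coords :: "nat \<Rightarrow> nat \<Rightarrow> (nat \<Rightarrow> 'a::field) \<Rightarrow> 'a \<Rightarrow> nat \<Rightarrow> 'a" where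
  "coords q m b y = (THE c. (\<forall>i<m. c i \<in> Fq q) \<and> (\<forall>i\<ge>m. c i = 0)
       \<and> y = (\<Sum>i<m. c i * b i))"

text \<open>Matrix of T w.r.t. bases A, B (row convention): T(a_i) = sum_j M_{ij} b_j.\<close>
definition rep_mat :: "nat \<Rightarrow> nat \<Rightarrow> ('a::field \<Rightarrow> 'a) \<Rightarrow> (nat \<Rightarrow> 'a) \<Rightarrow> (nat \<Rightarrow> 'a) \<Rightarrow> 'a mat" where
  "rep_mat q m T a b = mat m m (\<lambda>(i, j). coords q m b (T (a i)) j)"

end

theory Submission imports Defs "HOL-Number_Theory.Residues" "HOL-Computational_Algebra.Polynomial" begin

lemma power_card_same:
  fixes x :: "'a::{finite,field}"
  shows   "x ^ card (UNIV :: 'a set) = x"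
proof (cases "x = 0")
  case False
  have "x * (\<Prod>y\<in>UNIV-{0}. x * y) = x * x ^ (card (UNIV :: 'a set) - 1) * \<Prod>(UNIV-{0})"
    by (simp add: prod.distrib mult_ac)
  also have "x * x ^ (card (UNIV :: 'a set) - 1) = x ^ Suc (card (UNIV :: 'a set) - 1)"
    by (subst power_Suc) auto
  also have "Suc (card (UNIV :: 'a set) - 1) = card (UNIV :: 'a set)"
    using finite_UNIV_card_ge_0[where ?'a = 'a] by simp
  also have "(\<Prod>y\<in>UNIV-{0}. x * y) = (\<Prod>y\<in>UNIV-{0}. y)"
    by (rule prod.reindex_bij_witness[of _ "\<lambda>y. y / x" "\<lambda>y. x * y"]) (use False in auto)
  finally show ?thesis
    by simp
qed (use finite_UNIV_card_ge_0[where ?'a = 'a] in auto)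

lemma sum_shift_mod:
  fixes m c :: nat
  assumes "m > 0"
  shows "(\<Sum>l<m. g ((l + c) mod m)) = (\<Sum>l<m. (g l :: 'b::comm_monoid_add))"
proof -
  have inj: "inj_on (\<lambda>l. (l + c) mod m) {..<m}"
  proof (rule inj_onI)
    fix a b assume a: "a \<in> {..<m}" and b: "b \<in> {..<m}" and e: "(a + c) mod m = (b + c) mod m"
    hence "[a + c = b + c] (mod m)" by (simp add: cong_def)
    hence "[a = b] (mod m)" by (simp add: cong_add_rcancel_nat)
    thus "a = b" using a b by (simp add: cong_def)
  qed
  have im: "(\<lambda>l. (l + c) mod m) ` {..<m} = {..<m}"
    by (rule endo_inj_surj) (use inj assms in auto)
  show ?thesis
    using sum.reindex[OF inj, of g] im by simp
qed

lemma char_eq: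
  assumes "prime p" "k > 0" "q = p ^ k" "m \<ge> 1" "card (UNIV :: 'a::{finite,field} set) = q ^ m"
  shows "CHAR('a) = p"
proof -
  have pc: "prime CHAR('a)"
    by (intro prime_CHAR_semidom finite_imp_CHAR_pos) auto
  have "CHAR('a) dvd p ^ (k*m)" using CHAR_dvd_CARD[where 'a='a] assms by (simp add: power_mult)
  hence "CHAR('a) dvd p" using pc prime_dvd_power by blast
  thus ?thesis using pc assms(1) primes_dvd_imp_eq by blast
qed

locale ffq =
  fixes q m k :: nat and ty :: "'a::{finite,field} itself"
  assumes pc: "prime CHAR('a)" and qdef: "q = CHAR('a) ^ k" and kpos: "k > 0"
    and m1: "m \<ge> 1" and card: "card (UNIV :: 'a set) = q ^ m"
begin

lemma q2: "q \<ge> 2"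
proof -
  have "CHAR('a) \<ge> 2" using pc prime_ge_2_nat by blast
  moreover have "CHAR('a) \<le> CHAR('a) ^ k" using kpos pc
    by (metis One_nat_def Suc_leI prime_gt_0_nat self_le_power)
  ultimately show ?thesis using qdef by simp
qed

lemma frob_sum: "(sum (g::_ \<Rightarrow> 'a) A) ^ (q ^ n) = (\<Sum>i\<in>A. g i ^ (q ^ n))"
  by (rule freshmans_dream_sum'[OF pc, where n="k*n"]) (simp add: qdef power_mult)

lemma frob_add: "((x::'a) + y) ^ (q ^ n) = x ^ (q ^ n) + y ^ (q ^ n)"
  by (rule freshmans_dream'[OF pc, where n="k*n"]) (simp add: qdef power_mult)

lemma pw_add: "((x::'a) ^ (q ^ a)) ^ (q ^ b) = x ^ (q ^ (a + b))"
  by (simp add: power_add power_mult)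

lemma pow_qm: "(x::'a) ^ (q ^ (m * t)) = x"
proof (induction t)
  case 0 then show ?case by simp
next
  case (Suc t)
  have "x ^ (q ^ (m * Suc t)) = (x ^ (q ^ (m * t))) ^ (q ^ m)"
    by (simp only: pw_add) (simp add: algebra_simps)
  also have "\<dots> = x" using Suc power_card_same[of x] card by simp
  finally show ?case .
qed

lemma pw_mod: "(x::'a) ^ (q ^ n) = x ^ (q ^ (n mod m))"
proof -
  have "n = n mod m + m * (n div m)" by simp
  hence "x ^ (q ^ n) = (x ^ (q ^ (m * (n div m)))) ^ (q ^ (n mod m))"
    by (metis add.commute pw_add)
  thus ?thesis using pow_qm by simp
qed

lemma pw_cong: "a mod m = b mod m \<Longrightarrow> (x::'a) ^ (q ^ a) = x ^ (q ^ b)"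
  by (metis pw_mod)

lemma Fq_pow: "(c::'a) \<in> Fq q \<Longrightarrow> c ^ (q ^ n) = c"
  by (induction n) (auto simp: Fq_def power_mult)

lemma trace_sum: "trace q m (sum (g::_ \<Rightarrow> 'a) A) = (\<Sum>i\<in>A. trace q m (g i))"
  unfolding trace_def by (simp add: frob_sum sum.swap[of _ A])

lemma trace_smult: "(c::'a) \<in> Fq q \<Longrightarrow> trace q m (c * x) = c * trace q m x"
  unfolding trace_def by (simp add: power_mult_distrib Fq_pow sum_distrib_left)

lemma trace_Fq: "trace q m (x::'a) \<in> Fq q"
proof -
  have "trace q m x ^ q = (\<Sum>l<m. (x ^ (q ^ l)) ^ (q ^ 1))"
    unfolding trace_def using frob_sum[of _ _ 1] by simp
  also have "\<dots> = (\<Sum>l<m. x ^ (q ^ Suc l))" by (simp only: pw_add) simp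
  also have "\<dots> = (\<Sum>l<m. x ^ (q ^ l))"
  proof -
    have "(\<Sum>l<m. x ^ (q ^ Suc l)) = (\<Sum>l<m. x ^ (q ^ ((l + 1) mod m)))"
      by (intro sum.cong refl pw_cong) simp
    also have "\<dots> = (\<Sum>l<m. x ^ (q ^ l))"
      using sum_shift_mod[of m "\<lambda>l. x ^ (q ^ l)" 1] m1 by simp
    finally show ?thesis .
  qed
  finally show ?thesis unfolding Fq_def trace_def by simp
qed

lemma frob_diff: "((x::'a) - y) ^ (q ^ n) = x ^ (q ^ n) - y ^ (q ^ n)"
  using frob_add[of "x - y" y n] by (simp add: algebra_simps)

lemma trace_diff: "trace q m ((x::'a) - y) = trace q m x - trace q m y"
  unfolding trace_def by (simp add: frob_diff sum_subtractf)

lemma dual_sym: "is_dual_basis q m b b' \<Longrightarrow> is_dual_basis q m b' (b::nat \<Rightarrow> 'a)"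
  unfolding is_dual_basis_def by (metis mult.commute)

lemma trace_coef:
  assumes d: "is_dual_basis q m b b'" and c: "\<forall>i<m. (c i::'a) \<in> Fq q" and j: "j < m"
  shows "trace q m ((\<Sum>i<m. c i * b i) * b' j) = c j"
proof -
  have "trace q m ((\<Sum>i<m. c i * b i) * b' j) = (\<Sum>i<m. trace q m (c i * (b i * b' j)))"
    by (simp add: sum_distrib_right trace_sum mult.assoc)
  also have "\<dots> = (\<Sum>i<m. c i * (if i = j then 1 else 0))"
    using c d j by (intro sum.cong refl) (simp add: trace_smult is_dual_basis_def)
  also have "\<dots> = c j" using j by (simp add: if_distrib cong: if_cong)
  finally show ?thesis .
qed

lemma coords_dual:
  assumes b: "is_basis q m b" and d: "is_dual_basis q m b b'" and j: "j < m"
  shows "coords q m b (y::'a) j = trace q m (y * b' j)"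
proof -
  let ?P = "\<lambda>c. (\<forall>i<m. c i \<in> Fq q) \<and> (\<forall>i\<ge>m. c i = 0) \<and> y = (\<Sum>i<m. c i * b i)"
  have ex1: "\<exists>!c. ?P c" using b unfolding is_basis_def by blast
  hence P: "?P (coords q m b y)" unfolding coords_def by (rule theI')
  show ?thesis using trace_coef[OF d, of "coords q m b y" j] P j by metis
qed

lemma nondeg:
  assumes w: "(w::'a) \<noteq> 0"
  shows "\<exists>x. trace q m (w * x) \<noteq> 0"
proof (rule ccontr)
  assume "\<not> ?thesis"
  hence all: "\<And>x. trace q m (w * x) = 0" by blast
  define P where "P = (\<Sum>l<m. monom (w ^ (q ^ l)) (q ^ l))"
  have poly: "poly P x = trace q m (w * x)" for x
    by (simp add: P_def poly_sum poly_monom trace_def power_mult_distrib)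
  have cf: "coeff P n = (\<Sum>l<m. if q ^ l = n then w ^ (q ^ l) else 0)" for n
    by (simp add: P_def coeff_sum)
  have qq: "q \<ge> 2" by (rule q2)
  have "coeff P (q ^ (m - 1)) = (\<Sum>l<m. if l = m - 1 then w ^ (q ^ l) else 0)"
    unfolding cf using qq by (intro sum.cong refl) (simp add: power_inject_exp)
  also have "\<dots> = w ^ (q ^ (m - 1))" using m1 by simp
  finally have c1: "coeff P (q ^ (m - 1)) \<noteq> 0" using w by simp
  hence P0: "P \<noteq> 0" by auto
  have "degree P \<le> q ^ (m - 1)"
  proof (rule degree_le, intro allI impI)
    fix n assume n: "q ^ (m - 1) < n"
    have "q ^ l \<noteq> n" if "l < m" for l
    proof -
      have "q ^ l \<le> q ^ (m - 1)" using that qq by (intro power_increasing) auto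
      thus ?thesis using n by simp
    qed
    thus "coeff P n = 0" unfolding cf by (intro sum.neutral) auto
  qed
  moreover have "card {x. poly P x = 0} \<le> degree P" by (rule card_poly_roots_bound[OF P0])
  moreover have "{x. poly P x = 0} = UNIV" using poly all by auto
  moreover have "q ^ (m - 1) < q ^ m" using qq m1 by (intro power_strict_increasing) auto
  ultimately show False using card by simp
qed

lemma dual_is_basis:
  assumes b: "is_basis q m b" and d: "is_dual_basis q m b (b'::nat \<Rightarrow> 'a)"
  shows "is_basis q m b'"
  unfolding is_basis_def
proof
  fix y :: 'a
  have d': "is_dual_basis q m b' b" by (rule dual_sym[OF d])
  define c where "c i = (if i < m then trace q m (y * b i) else 0)" for i
  define z where "z = (\<Sum>i<m. c i * b' i)"
  have cF: "\<forall>i<m. c i \<in> Fq q" by (simp add: c_def trace_Fq)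
  have tj: "trace q m ((y - z) * b j) = 0" if j: "j < m" for j
  proof -
    have "trace q m (z * b j) = c j" unfolding z_def by (rule trace_coef[OF d' cF j])
    thus ?thesis using j by (simp add: left_diff_distrib trace_diff c_def)
  qed
  have tx: "trace q m ((y - z) * x) = 0" for x
  proof -
    obtain e where e: "\<forall>i<m. e i \<in> Fq q" "x = (\<Sum>i<m. e i * b i)"
      using b unfolding is_basis_def by blast
    have "trace q m ((y - z) * x) = (\<Sum>i<m. trace q m (e i * ((y - z) * b i)))"
      unfolding e(2) by (simp add: sum_distrib_left trace_sum mult_ac)
    also have "\<dots> = 0" using e(1) tj by (intro sum.neutral) (simp add: trace_smult)
    finally show ?thesis .
  qed
  hence yz: "y = z" using nondeg[of "y - z"] by auto
  show "\<exists>!c. (\<forall>i<m. c i \<in> Fq q) \<and> (\<forall>i\<ge>m. c i = 0) \<and> y = (\<Sum>i<m. c i * b' i)"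
  proof (rule ex1I[of _ c])
    show "(\<forall>i<m. c i \<in> Fq q) \<and> (\<forall>i\<ge>m. c i = 0) \<and> y = (\<Sum>i<m. c i * b' i)"
      using cF yz unfolding z_def c_def by simp
  next
    fix c' assume c': "(\<forall>i<m. c' i \<in> Fq q) \<and> (\<forall>i\<ge>m. c' i = 0) \<and> y = (\<Sum>i<m. c' i * b' i)"
    show "c' = c"
    proof
      fix j show "c' j = c j"
      proof (cases "j < m")
        case True
        have "trace q m (y * b j) = c' j" using c' trace_coef[OF d', of c' j] True by metis
        thus ?thesis using True c_def by simp
      next
        case False thus ?thesis using c' c_def by simp
      qed
    qed
  qed
qed

lemma adjoint:
  fixes f :: "nat \<Rightarrow> 'a" and x y :: 'a
  shows "trace q m (qpoly_eval q m f x * y) = trace q m (x * qpoly_eval q m (qrev q m f) y)"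
proof -
  define G where "G i n = f i ^ (q ^ n) * x ^ (q ^ (n + i)) * y ^ (q ^ n)" for i n
  have L: "trace q m (qpoly_eval q m f x * y) = (\<Sum>l<m. \<Sum>i<m. G i l)"
    unfolding trace_def qpoly_eval_def G_def
    by (simp add: sum_distrib_right frob_sum power_mult_distrib pw_add add.commute)
  have R: "trace q m (x * qpoly_eval q m (qrev q m f) y) =
     (\<Sum>l<m. \<Sum>k<m. x ^ (q ^ l) * f ((m - k) mod m) ^ (q ^ (l + k)) * y ^ (q ^ (l + k)))"
    unfolding trace_def qpoly_eval_def qrev_def
    by (simp add: sum_distrib_left frob_sum power_mult_distrib pw_add add.commute mult.assoc)
  define H where "H k l = x ^ (q ^ l) * f ((m - k) mod m) ^ (q ^ (l + k)) * y ^ (q ^ (l + k))" for k l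
  have inner: "(\<Sum>l<m. H k l) = (\<Sum>n<m. G ((m - k) mod m) n)" if k: "k < m" for k
  proof -
    have "(\<Sum>l<m. H k l) = (\<Sum>n<m. H k ((n + (m - k)) mod m))"
      using sum_shift_mod[of m "H k" "m - k"] k by simp
    also have "\<dots> = (\<Sum>n<m. G ((m - k) mod m) n)"
    proof (intro sum.cong refl)
      fix n assume n: "n \<in> {..<m}"
      have e1: "((n + (m - k)) mod m + k) mod m = n mod m"
        using k by (simp add: mod_add_left_eq)
      have e2: "(n + (m - k)) mod m mod m = (n + (m - k) mod m) mod m"
        by (simp add: mod_add_right_eq)
      show "H k ((n + (m - k)) mod m) = G ((m - k) mod m) n"
        unfolding H_def G_def using pw_cong[OF e1] pw_cong[OF e2] by (simp add: mult_ac)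
    qed
    finally show ?thesis .
  qed
  have "(\<Sum>l<m. \<Sum>k<m. H k l) = (\<Sum>k<m. \<Sum>l<m. H k l)" by (rule sum.swap)
  also have "\<dots> = (\<Sum>k<m. \<Sum>n<m. G ((m - k) mod m) n)"
    by (rule sum.cong[OF refl], rule inner, simp)
  also have "\<dots> = (\<Sum>i<m. \<Sum>n<m. G i n)"
  proof -
    have inv: "(m - (m - a) mod m) mod m = a" if "a < m" for a
      using that by (cases "a = 0") (auto simp: mod_if)
    show ?thesis
      by (rule sum.reindex_bij_witness[of _ "\<lambda>k. (m - k) mod m" "\<lambda>k. (m - k) mod m"])
         (use m1 inv in auto)
  qed
  also have "\<dots> = (\<Sum>l<m. \<Sum>i<m. G i l)" by (rule sum.swap)
  finally show ?thesis using L R unfolding H_def by simp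
qed

end

theorem lemma1:
  fixes q m :: nat
    and f :: "nat \<Rightarrow> 'a::{finite, field}"
    and \<alpha> \<alpha>' \<beta> \<beta>' :: "nat \<Rightarrow> 'a"
    and M :: "'a mat"
  assumes "\<exists>p k. prime p \<and> k > 0 \<and> q = p ^ k"
    and "m \<ge> 1"
    and "card (UNIV :: 'a set) = q ^ m"
    and "is_basis q m \<alpha>" and "is_basis q m \<beta>"
    and "is_dual_basis q m \<alpha> \<alpha>'" and "is_dual_basis q m \<beta> \<beta>'"
    and "M \<in> carrier_mat m m"
    and "\<forall>i<m. \<forall>j<m. M $$ (i, j) \<in> Fq q"
  shows "M = rep_mat q m (qpoly_eval q m f) \<alpha> \<beta>
     \<longleftrightarrow> transpose_mat M = rep_mat q m (qpoly_eval q m (qrev q m f)) \<beta>' \<alpha>'"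
proof -
  obtain p k where pk: "prime p" "k > 0" "q = p ^ k" using assms(1) by blast
  have cp: "CHAR('a) = p" using char_eq[OF pk assms(2,3)] .
  interpret ffq q m k "TYPE('a)"
    by unfold_locales (use pk cp assms(2,3) in auto)
  have ba': "is_basis q m \<alpha>'" by (rule dual_is_basis[OF assms(4,6)])
  have da': "is_dual_basis q m \<alpha>' \<alpha>" by (rule dual_sym[OF assms(6)])
  have key: "rep_mat q m (qpoly_eval q m (qrev q m f)) \<beta>' \<alpha>' =
      transpose_mat (rep_mat q m (qpoly_eval q m f) \<alpha> \<beta>)"
  proof (rule eq_matI)
    fix i j assume ij: "i < dim_row (transpose_mat (rep_mat q m (qpoly_eval q m f) \<alpha> \<beta>))"
      "j < dim_col (transpose_mat (rep_mat q m (qpoly_eval q m f) \<alpha> \<beta>))"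
    hence i: "i < m" and j: "j < m" by (auto simp: rep_mat_def)
    have "rep_mat q m (qpoly_eval q m (qrev q m f)) \<beta>' \<alpha>' $$ (i, j)
        = trace q m (qpoly_eval q m (qrev q m f) (\<beta>' i) * \<alpha> j)"
      using i j by (simp add: rep_mat_def coords_dual[OF ba' da'])
    also have "\<dots> = trace q m (qpoly_eval q m f (\<alpha> j) * \<beta>' i)"
      using adjoint[of f "\<alpha> j" "\<beta>' i"] by (simp add: mult.commute)
    also have "\<dots> = transpose_mat (rep_mat q m (qpoly_eval q m f) \<alpha> \<beta>) $$ (i, j)"
      using i j by (simp add: rep_mat_def coords_dual[OF assms(5,7)])
    finally show "rep_mat q m (qpoly_eval q m (qrev q m f)) \<beta>' \<alpha>' $$ (i, j) =
      transpose_mat (rep_mat q m (qpoly_eval q m f) \<alpha> \<beta>) $$ (i, j)" .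
  qed (auto simp: rep_mat_def)
  show ?thesis unfolding key by (metis transpose_transpose)
qed

end
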